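(* Let $G=SL_3(\mathbb{C})$ (so $\mathfrak g\cong\mathfrak{sl}_3$) and let $H\subseteq G$ be a connected algebraic subgroup whose Lie algebra is a root $\mathfrak{sl}_2$-subalgebra of $\mathfrak g$. Then for each of $X=X^{(1)}$ and $X=X^{(2)}$, the ring $\mathbb{C}[X]^H$ has positive dimension (in particular it is not $\mathbb{C}$).
   Context: A root $\mathfrak{sl}_2$-subalgebra is one of the form $\operatorname{span}\{X_\alpha,X_{-\alpha},H_\alpha\}$ for a root $\alpha$ of $\mathfrak g$ (with $X_{\pm\alpha}$ root vectors and $H_\alpha=[X_\alpha,X_{-\alpha}]$, $\alpha(H_\alpha)=2$). Fix a maximal torus and Borel subgroup of $G$, fundamental weights $\omega_1,\omega_2$, longest Weyl element $w_0$. For $k=1,2$ let $v_k$ be a highest weight vector in the irreducible representation $L(-w_0(\omega_k))$ and $X^{(k)}=G\cdot v_k$. $\mathbb{C}[X]^H$ is the ring of $H$-invariant regular functions on $X$ (for left translation). *)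

theory Defs
  imports "HOL-Analysis.Analysis" "HOL-Computational_Algebra.Polynomial"
begin

definition SL3 :: "(complex^3^3) set" where
  "SL3 = {g. det g = 1}"

definition polyfun3 :: "(complex^3 \<Rightarrow> complex) \<Rightarrow> bool" where
  "polyfun3 f \<longleftrightarrow> (\<exists>S c. finite S \<and>
     (\<forall>x. f x = (\<Sum>m\<in>S. c m * (\<Prod>i\<in>UNIV. (x $ i) ^ m i))))"

text \<open>Regular functions on a locally closed subset X of C^3 (local quotients of polynomials);
  only the values on X matter.\<close>
definition regular_on :: "(complex^3) set \<Rightarrow> (complex^3 \<Rightarrow> complex) \<Rightarrow> bool" where
  "regular_on X f \<longleftrightarrow> (\<forall>x\<in>X. \<exists>p q. polyfun3 p \<and> polyfun3 q \<and> q x \<noteq> 0 \<and>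
     (\<forall>y\<in>X. q y \<noteq> 0 \<longrightarrow> f y = p y / q y))"

definition std_act :: "complex^3^3 \<Rightarrow> complex^3 \<Rightarrow> complex^3" where
  "std_act g x = g *v x"

definition dual_act :: "complex^3^3 \<Rightarrow> complex^3 \<Rightarrow> complex^3" where
  "dual_act g phi = phi v* matrix_inv g"

text \<open>Torus = diagonal matrices, Borel = upper triangular matrices.
  L(omega_2) = wedge^2 C^3 = (C^3)^*, highest weight vector e_3^*;
  L(omega_1) = C^3, highest weight vector e_1.
  X^(1) = G.v_1 in L(-w0 omega_1) = L(omega_2), X^(2) = G.v_2 in L(-w0 omega_2) = L(omega_1).\<close>
definition X1 :: "(complex^3) set" where
  "X1 = (\<lambda>g. dual_act g (axis 2 1)) ` SL3"

definition X2 :: "(complex^3) set" where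
  "X2 = (\<lambda>g. std_act g (axis 0 1)) ` SL3"

text \<open>The connected subgroup of SL_3 with Lie algebra the root sl_2 for the root
  eps_i - eps_j (i \<noteq> j): SL_2 embedded in the (i,j) block, identity on the third coordinate.\<close>
definition root_SL2 :: "3 \<Rightarrow> 3 \<Rightarrow> (complex^3^3) set" where
  "root_SL2 i j = {g \<in> SL3. \<forall>k. k \<noteq> i \<and> k \<noteq> j \<longrightarrow>
      g $ k $ k = 1 \<and> (\<forall>l. l \<noteq> k \<longrightarrow> g $ k $ l = 0 \<and> g $ l $ k = 0)}"

definition inv_regular :: "(complex^3^3) set \<Rightarrow> (complex^3^3 \<Rightarrow> complex^3 \<Rightarrow> complex^3)
    \<Rightarrow> (complex^3) set \<Rightarrow> (complex^3 \<Rightarrow> complex) set" where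
  "inv_regular H act X = {f. regular_on X f \<and> (\<forall>h\<in>H. \<forall>y\<in>X. f (act h y) = f y)}"

text \<open>Positive (Krull) dimension of the domain C[X]^H, expressed as transcendence degree \<ge> 1:
  some element is transcendental over C (no nonzero univariate polynomial kills it on X).\<close>
definition pos_dim :: "(complex^3) set \<Rightarrow> (complex^3 \<Rightarrow> complex) set \<Rightarrow> bool" where
  "pos_dim X R \<longleftrightarrow> (\<exists>f\<in>R. \<forall>p :: complex poly. p \<noteq> 0 \<longrightarrow> (\<exists>y\<in>X. poly p (f y) \<noteq> 0))"

end

theory Submission imports Defs begin

lemma ex_pair:
  fixes a b :: 3 and c :: complex
  assumes "c \<noteq> 0"
  shows "\<exists>g h. g ** h = mat 1 \<and> h ** g = mat 1 \<and> det g = 1 \<and> det h = 1 \<and> h $ a $ b = c"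
proof (cases "a = b")
  case False
  define h :: "complex^3^3" where "h = (\<chi> r s. if r = s then 1 else if r = a \<and> s = b then c else 0)"
  define g :: "complex^3^3" where "g = (\<chi> r s. if r = s then 1 else if r = a \<and> s = b then -c else 0)"
  have "g ** h = mat 1 \<and> h ** g = mat 1 \<and> det g = 1 \<and> det h = 1 \<and> h $ a $ b = c"
    using False exhaust_3[of a] exhaust_3[of b] unfolding g_def h_def
    apply (elim disjE)
    by (simp_all add: matrix_matrix_mult_def vec_eq_iff forall_3 sum_3 det_3 mat_def)
  then show ?thesis by blast
next
  case True
  define h :: "complex^3^3" where "h = (\<chi> r s. if r = s then (if r = a then c else if r = a + 1 then inverse c else 1) else 0)"
  define g :: "complex^3^3" where "g = (\<chi> r s. if r = s then (if r = a then inverse c else if r = a + 1 then c else 1) else 0)"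
  have "g ** h = mat 1 \<and> h ** g = mat 1 \<and> det g = 1 \<and> det h = 1 \<and> h $ a $ b = c"
    using True assms exhaust_3[of a] unfolding g_def h_def
    apply (elim disjE)
    by (simp_all add: matrix_matrix_mult_def vec_eq_iff forall_3 sum_3 det_3 mat_def)
  then show ?thesis by blast
qed

lemma inv_unique:
  fixes g h :: "complex^3^3"
  assumes "g ** h = mat 1" "h ** g = mat 1"
  shows "matrix_inv g = h"
proof -
  have ex: "\<exists>A'::complex^3^3. g ** A' = mat 1 \<and> A' ** g = mat 1" using assms by blast
  have "g ** matrix_inv g = mat 1 \<and> matrix_inv g ** g = mat 1"
    unfolding matrix_inv_def by (rule someI_ex[OF ex])
  then have "matrix_inv g = matrix_inv g ** (g ** h)" using assms by (simp add: matrix_mul_rid)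
  also have "\<dots> = (matrix_inv g ** g) ** h" by (simp add: matrix_mul_assoc)
  also have "\<dots> = h" using \<open>g ** matrix_inv g = mat 1 \<and> matrix_inv g ** g = mat 1\<close> by (simp add: matrix_mul_lid)
  finally show ?thesis .
qed

lemma inv_left:
  fixes g :: "complex^3^3"
  assumes "det g = 1"
  shows "matrix_inv g ** g = mat 1"
proof -
  have "invertible g" by (simp add: invertible_det_nz assms)
  then have ex: "\<exists>A'::complex^3^3. g ** A' = mat 1 \<and> A' ** g = mat 1" unfolding invertible_def by blast
  have "g ** matrix_inv g = mat 1 \<and> matrix_inv g ** g = mat 1"
    unfolding matrix_inv_def by (rule someI_ex[OF ex])
  then show ?thesis by simp
qed

lemma polyfun_coord: "polyfun3 (\<lambda>x. x $ k)"
  unfolding polyfun3_def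
proof (intro exI conjI allI)
  show "finite {(\<lambda>l. if l = k then 1 else 0) :: 3 \<Rightarrow> nat}" by simp
  fix x :: "complex^3"
  have "(\<Prod>i\<in>UNIV. (x $ i) ^ (if i = k then 1 else 0)) = (\<Prod>i\<in>UNIV. if i = k then x $ i else 1)"
    by (rule prod.cong) auto
  also have "\<dots> = x $ k" by (simp add: prod.delta)
  finally show "x $ k = (\<Sum>m\<in>{(\<lambda>l. if l = k then 1 else 0) :: 3 \<Rightarrow> nat}. (\<lambda>_. 1) m * (\<Prod>i\<in>UNIV. (x $ i) ^ m i))"
    by simp
qed

lemma polyfun_one: "polyfun3 (\<lambda>x. 1)"
  unfolding polyfun3_def
  by (rule exI[of _ "{\<lambda>_. 0}"], rule exI[of _ "\<lambda>_. 1"]) simp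

lemma regular_coord: "regular_on X (\<lambda>x. x $ k)"
  unfolding regular_on_def
  using polyfun_coord[of k] polyfun_one by fastforce

lemma root_row_col:
  assumes "h \<in> root_SL2 i j" "k \<noteq> i" "k \<noteq> j"
  shows "h $ k $ l = (if l = k then 1 else 0)" "h $ l $ k = (if l = k then 1 else 0)"
  using assms unfolding root_SL2_def by auto

lemma std_inv:
  assumes "h \<in> root_SL2 i j" "k \<noteq> i" "k \<noteq> j"
  shows "std_act h y $ k = y $ k"
proof -
  have "std_act h y $ k = (\<Sum>l\<in>UNIV. (if l = k then 1 else 0) * y $ l)"
    unfolding std_act_def matrix_vector_mult_def using root_row_col(1)[OF assms] by simp
  also have "\<dots> = (\<Sum>l\<in>UNIV. if l = k then y $ l else 0)" by (rule sum.cong) auto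
  also have "\<dots> = y $ k" by simp
  finally show ?thesis .
qed

lemma dual_inv:
  assumes "h \<in> root_SL2 i j" "k \<noteq> i" "k \<noteq> j"
  shows "dual_act h y $ k = y $ k"
proof -
  have dh: "det h = 1" using assms(1) unfolding root_SL2_def SL3_def by simp
  have col: "matrix_inv h $ l $ k = (if l = k then 1 else 0)" for l
  proof -
    have "(matrix_inv h ** h) $ l $ k = mat 1 $ l $ k" using inv_left[OF dh] by simp
    moreover have "(matrix_inv h ** h) $ l $ k = (\<Sum>m\<in>UNIV. matrix_inv h $ l $ m * (if m = k then 1 else 0))"
      unfolding matrix_matrix_mult_def using root_row_col(2)[OF assms] by simp
    moreover have "(\<Sum>m\<in>UNIV. matrix_inv h $ l $ m * (if m = k then 1 else 0)) = (\<Sum>m\<in>UNIV. if m = k then matrix_inv h $ l $ m else 0)"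
      by (rule sum.cong) auto
    ultimately show ?thesis by (simp add: mat_def)
  qed
  have "dual_act h y $ k = (\<Sum>l\<in>UNIV. y $ l * (if l = k then 1 else 0))"
    unfolding dual_act_def vector_matrix_mult_def using col by simp
  also have "\<dots> = (\<Sum>l\<in>UNIV. if l = k then y $ l else 0)" by (rule sum.cong) auto
  also have "\<dots> = y $ k" by simp
  finally show ?thesis .
qed

lemma good_value:
  fixes p :: "complex poly"
  assumes "p \<noteq> 0"
  obtains c where "c \<noteq> 0" "poly p c \<noteq> 0"
proof -
  have "finite {x. poly p x = 0}" using poly_roots_finite[OF assms] .
  then have "finite (insert 0 {x. poly p x = 0})" by simp
  then obtain c where "c \<notin> insert 0 {x. poly p x = 0}"
    using ex_new_if_finite[OF infinite_UNIV_char_0] by blast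
  then show ?thesis using that by auto
qed

lemma row_axis: "(axis a (1::complex) v* M) $ k = M $ a $ k"
proof -
  have "(axis a (1::complex) v* M) $ k = (\<Sum>l\<in>UNIV. (if l = a then 1 else 0) * M$l$k)"
    unfolding vector_matrix_mult_def axis_def by simp
  also have "\<dots> = (\<Sum>l\<in>UNIV. if l = a then M$l$k else 0)" by (rule sum.cong) auto
  also have "\<dots> = M $ a $ k" by simp
  finally show ?thesis .
qed

lemma X1_val: "c \<noteq> 0 \<Longrightarrow> \<exists>y\<in>X1. y $ k = c"
proof -
  assume "c \<noteq> 0"
  then obtain g h where gh: "g ** h = mat 1" "h ** g = mat 1" "det g = 1" "det h = 1" "h $ 2 $ k = c"
    using ex_pair by blast
  have "dual_act g (axis 2 1) $ k = c" using gh(5)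
    unfolding dual_act_def inv_unique[OF gh(1,2)] by (simp add: row_axis)
  moreover have "dual_act g (axis 2 1) \<in> X1" unfolding X1_def SL3_def using gh(3) by blast
  ultimately show ?thesis by blast
qed

lemma X2_val: "c \<noteq> 0 \<Longrightarrow> \<exists>y\<in>X2. y $ k = c"
proof -
  assume "c \<noteq> 0"
  then obtain g h where gh: "g ** h = mat 1" "h ** g = mat 1" "det g = 1" "det h = 1" "h $ k $ 0 = c"
    using ex_pair by blast
  have "std_act h (axis 0 1) $ k = c"
    unfolding std_act_def matrix_vector_mult_def axis_def
    using gh(5) by (simp add: if_distrib cong: if_cong)
  moreover have "std_act h (axis 0 1) \<in> X2" unfolding X2_def SL3_def using gh(4) by blast
  ultimately show ?thesis by blast
qed

theorem lemma3p11:
  fixes i j :: 3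
  assumes "i \<noteq> j"
  shows "pos_dim X1 (inv_regular (root_SL2 i j) dual_act X1)
       \<and> pos_dim X2 (inv_regular (root_SL2 i j) std_act X2)"
proof -
  have "\<exists>k::3. k \<noteq> i \<and> k \<noteq> j"
    using exhaust_3[of i] exhaust_3[of j]
    apply (elim disjE)
    by (simp_all add: exI[of _ "1::3"] exI[of _ "2::3"] exI[of _ "3::3"])
  then obtain k :: 3 where k: "k \<noteq> i" "k \<noteq> j" by blast
  have f1: "(\<lambda>x. x $ k) \<in> inv_regular (root_SL2 i j) dual_act X1"
    unfolding inv_regular_def using regular_coord dual_inv[OF _ k] by blast
  have f2: "(\<lambda>x. x $ k) \<in> inv_regular (root_SL2 i j) std_act X2"
    unfolding inv_regular_def using regular_coord std_inv[OF _ k] by blast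
  show ?thesis
  proof
    show "pos_dim X1 (inv_regular (root_SL2 i j) dual_act X1)"
      unfolding pos_dim_def
    proof (intro bexI[OF _ f1] allI impI)
      fix p :: "complex poly" assume "p \<noteq> 0"
      then obtain c where "c \<noteq> 0" "poly p c \<noteq> 0" by (rule good_value)
      then show "\<exists>y\<in>X1. poly p (y $ k) \<noteq> 0" using X1_val[of c k] by auto
    qed
    show "pos_dim X2 (inv_regular (root_SL2 i j) std_act X2)"
      unfolding pos_dim_def
    proof (intro bexI[OF _ f2] allI impI)
      fix p :: "complex poly" assume "p \<noteq> 0"
      then obtain c where "c \<noteq> 0" "poly p c \<noteq> 0" by (rule good_value)
      then show "\<exists>y\<in>X2. poly p (y $ k) \<noteq> 0" using X2_val[of c k] by auto
    qed
  qed
qed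

end
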